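(* Let $\boldsymbol\mu>\mathbf 0$ and let $\hat{\mathbf G},\tilde{\mathbf G}\in\mathcal G(\boldsymbol\mu)$ correspond to choices $(\hat k_1,\dots,\hat k_N)$ and $(\tilde k_1,\dots,\tilde k_N)$ that differ in exactly one index $i$ (i.e. $\hat k_i\neq\tilde k_i$ and $\hat k_j=\tilde k_j$ for $j\neq i$). Assume $\mathbf I-\hat{\mathbf G}$ and $\mathbf I-\tilde{\mathbf G}$ are irreducible and $\lambda(\mathbf I-\hat{\mathbf G})<1$, $\lambda(\mathbf I-\tilde{\mathbf G})<1$, and let $\hat{\mathbf p}=\hat{\mathbf G}^{-1}\mathbf n_{\hat{\mathbf G}}$, $\tilde{\mathbf p}=\tilde{\mathbf G}^{-1}\mathbf n_{\tilde{\mathbf G}}$. Then there exists $\mathbf p\in\{\hat{\mathbf p},\tilde{\mathbf p}\}$ such that $\hat{\mathbf G}\mathbf p\geq\mathbf n_{\hat{\mathbf G}}$ and $\tilde{\mathbf G}\mathbf p\geq\mathbf n_{\tilde{\mathbf G}}$.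
   Context: Multicast system: $N$ transmitters; transmitter $T_i$ has $K_i\geq1$ receivers $R_i^{k}$, $k\in\mathcal K_i=\{1,\dots,K_i\}$. Channel gains $g_{r_i^{k},t_j}\geq 0$ (from $T_j$ to $R_i^k$) with $g_{r_i^{k},t_i}>0$; noise variance $\sigma^2>0$. For $\boldsymbol\mu\in\mathbb R^N$, $\mathbf a_i^{k}(\boldsymbol\mu)\in\mathbb R^{1\times N}$ is the row vector with $i$-th entry $1$ and $j$-th entry $-\mu_i g_{r_i^{k},t_j}/g_{r_i^{k},t_i}$ for $j\neq i$; $n_i^{k}(\boldsymbol\mu)=\mu_i\sigma^2/g_{r_i^{k},t_i}$. $\mathcal G(\boldsymbol\mu)$ is the set of $N\times N$ matrices whose $i$-th row is $\mathbf a_i^{k_i}(\boldsymbol\mu)$ for a choice $k_i\in\mathcal K_i$ ($i=1,\dots,N$); for such $\mathbf G$, $\mathbf n_{\mathbf G}=(n_1^{k_1}(\boldsymbol\mu),\dots,n_N^{k_N}(\boldsymbol\mu))^T$. $\lambda(\cdot)$ is the Perron–Frobenius eigenvalue (spectral radius). Inequalities are componentwise. *)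

theory Defs
  imports "HOL-Analysis.Analysis"
begin

text \<open>Transmitters are indexed by a finite type 'n (so N = CARD('n)).
  Receiver k of transmitter i, for k in {1..K i}.  The gain from T_j to R_i^k is g i k j.\<close>

definition choice :: "('n \<Rightarrow> nat) \<Rightarrow> ('n \<Rightarrow> nat) \<Rightarrow> bool" where
  "choice K kc \<longleftrightarrow> (\<forall>i. kc i \<in> {1..K i})"

definition arow :: "('n \<Rightarrow> nat \<Rightarrow> 'n \<Rightarrow> real) \<Rightarrow> real^'n \<Rightarrow> 'n \<Rightarrow> nat \<Rightarrow> real^'n" where
  "arow g mu i k = (\<chi> j. if j = i then 1 else - (mu$i) * g i k j / g i k i)"

definition nval :: "real \<Rightarrow> ('n \<Rightarrow> nat \<Rightarrow> 'n \<Rightarrow> real) \<Rightarrow> real^'n \<Rightarrow> 'n \<Rightarrow> nat \<Rightarrow> real" where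
  "nval sigma2 g mu i k = mu$i * sigma2 / g i k i"

definition Gmat :: "('n \<Rightarrow> nat \<Rightarrow> 'n \<Rightarrow> real) \<Rightarrow> real^'n \<Rightarrow> ('n \<Rightarrow> nat) \<Rightarrow> real^'n^'n" where
  "Gmat g mu kc = (\<chi> i. arow g mu i (kc i))"

definition nvec :: "real \<Rightarrow> ('n \<Rightarrow> nat \<Rightarrow> 'n \<Rightarrow> real) \<Rightarrow> real^'n \<Rightarrow> ('n \<Rightarrow> nat) \<Rightarrow> real^'n" where
  "nvec sigma2 g mu kc = (\<chi> i. nval sigma2 g mu i (kc i))"

text \<open>Irreducibility: the directed graph of the matrix is strongly connected
  (standard equivalent of non-reducibility by permutation; 1x1 matrices are irreducible).\<close>
definition irreducible_mat :: "real^'n^'n \<Rightarrow> bool" where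
  "irreducible_mat A \<longleftrightarrow> (\<forall>i j. i \<noteq> j \<longrightarrow> (i, j) \<in> {(a, b). A$a$b \<noteq> 0}\<^sup>+)"

definition spectral_radius :: "real^'n^'n \<Rightarrow> real" where
  "spectral_radius A = Sup {cmod z | z. \<exists>v :: complex^'n. v \<noteq> 0 \<and>
      (\<chi> i j. complex_of_real (A$i$j)) *v v = z *s v}"

end

theory Submission imports Defs begin

lemma eig_bdd:
  fixes A :: "real^'n^'n"
  shows "bdd_above {cmod z | z. \<exists>v :: complex^'n. v \<noteq> 0 \<and>
      (\<chi> i j. complex_of_real (A$i$j)) *v v = z *s v}"
proof -
  let ?M = "(\<chi> i j. complex_of_real (A$i$j)) :: complex^'n^'n"
  have "bounded_linear ((*v) ?M)" by simp
  then obtain K where K: "\<And>x. norm (?M *v x) \<le> norm x * K"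
    using bounded_linear.bounded by blast
  have nz: "norm (z *s v) = cmod z * norm v" for z :: complex and v :: "complex^'n"
  proof -
    have "norm (z *s v) = L2_set (\<lambda>i. cmod z * norm (v$i)) UNIV"
      unfolding norm_vec_def by (simp add: vector_scalar_mult_def norm_mult)
    also have "\<dots> = cmod z * L2_set (\<lambda>i. norm (v$i)) UNIV"
      by (simp add: L2_set_right_distrib)
    finally show ?thesis by (simp add: norm_vec_def)
  qed
  show ?thesis
  proof (rule bdd_aboveI[of _ K], clarify)
    fix z :: complex and v :: "complex^'n"
    assume v: "v \<noteq> 0" and e: "?M *v v = z *s v"
    have "cmod z * norm v \<le> norm v * K" using K[of v] e nz by simp
    moreover have "norm v > 0" using v by simp
    ultimately show "cmod z \<le> K" by (simp add: mult.commute)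
  qed
qed

lemma real_eig:
  fixes A :: "real^'n^'n" and v :: "real^'n"
  assumes "v \<noteq> 0" "A *v v = s *s v"
  shows "\<bar>s\<bar> \<le> spectral_radius A"
proof -
  let ?vc = "(\<chi> i. complex_of_real (v$i)) :: complex^'n"
  have "?vc \<noteq> 0" using assms(1) by (auto simp: vec_eq_iff)
  moreover have "(\<chi> i j. complex_of_real (A$i$j)) *v ?vc = complex_of_real s *s ?vc"
  proof -
    have "(A *v v)$i = s * v$i" for i using assms(2) by (simp add: vector_scalar_mult_def)
    then show ?thesis
      by (auto simp: vec_eq_iff matrix_vector_mult_def vector_scalar_mult_def
          simp flip: of_real_mult of_real_sum)
  qed
  ultimately have "cmod (complex_of_real s) \<in> {cmod z | z. \<exists>v :: complex^'n. v \<noteq> 0 \<and>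
      (\<chi> i j. complex_of_real (A$i$j)) *v v = z *s v}" by blast
  then show ?thesis unfolding spectral_radius_def
    using cSup_upper[OF _ eig_bdd] by fastforce
qed

lemma no_super:
  fixes B :: "real^'n^'n" and u :: "real^'n"
  assumes Bnn: "\<forall>i j. B$i$j \<ge> 0" and rad: "spectral_radius B < 1"
    and u0: "\<forall>i. u$i \<ge> 0" and unz: "u \<noteq> 0" and Bu: "\<forall>i. (B *v u)$i \<ge> u$i"
  shows False
proof -
  define S where "S = {v::real^'n. (\<forall>i. v$i \<ge> 0) \<and> sum (\<lambda>i. v$i) UNIV = 1 \<and> (\<forall>i. (B *v v)$i \<ge> v$i)}"
  have Bmono: "(B *v x)$i \<ge> 0" if "\<forall>j. x$j \<ge> 0" for x i
    using that Bnn by (auto simp: matrix_vector_mult_def intro!: sum_nonneg)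
  have sumB: "sum (\<lambda>i. (B *v v)$i) UNIV \<ge> 1" if "v \<in> S" for v
  proof -
    have "sum (\<lambda>i. v$i) UNIV \<le> sum (\<lambda>i. (B *v v)$i) UNIV"
      using that unfolding S_def by (intro sum_mono) auto
    then show ?thesis using that unfolding S_def by simp
  qed
  define f where "f v = (1 / sum (\<lambda>i. (B *v v)$i) UNIV) *\<^sub>R (B *v v)" for v
  have "closed S"
  proof -
    have "S = (\<Inter>i. {v. v$i \<ge> 0}) \<inter> {v. sum (\<lambda>i. v$i) UNIV = 1} \<inter> (\<Inter>i. {v. (B *v v)$i - v$i \<ge> 0})"
      unfolding S_def by auto
    moreover have "closed {v::real^'n. sum (\<lambda>i. v$i) UNIV = 1}"
      by (intro closed_Collect_eq continuous_intros)
    moreover have "closed {v::real^'n. v$i \<ge> 0}" for i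
      by (intro closed_Collect_le continuous_intros)
    moreover have "closed {v. (B *v v)$i - v$i \<ge> 0}" for i
      unfolding matrix_vector_mult_def by (intro closed_Collect_le continuous_intros)
    ultimately show ?thesis by (auto intro!: closed_Int closed_INT)
  qed
  moreover have "bounded S"
  proof -
    have "norm v \<le> 1" if "v \<in> S" for v
    proof -
      have "norm v \<le> sum (\<lambda>i. \<bar>v$i\<bar>) UNIV" by (rule norm_le_l1_cart)
      also have "\<dots> = 1" using that unfolding S_def by simp
      finally show ?thesis .
    qed
    then show ?thesis unfolding bounded_iff by blast
  qed
  ultimately have "compact S" using compact_eq_bounded_closed by blast
  moreover have "convex S"
  proof (rule convexI)
    fix x y :: "real^'n" and a b :: real
    assume xS: "x \<in> S" and yS: "y \<in> S" and ab: "0 \<le> a" "0 \<le> b" "a + b = 1"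
    have x: "\<forall>i. 0 \<le> x $ i" "sum (($) x) UNIV = 1" "\<forall>i. x $ i \<le> (B *v x) $ i"
      using xS unfolding S_def by auto
    have y: "\<forall>i. 0 \<le> y $ i" "sum (($) y) UNIV = 1" "\<forall>i. y $ i \<le> (B *v y) $ i"
      using yS unfolding S_def by auto
    have "(\<forall>i. 0 \<le> a * x $ i + b * y $ i) \<and>
       (\<Sum>i\<in>UNIV. a * x $ i + b * y $ i) = 1 \<and>
       (\<forall>i. a * x $ i + b * y $ i \<le> (B *v (a *\<^sub>R x + b *\<^sub>R y)) $ i)"
    proof (intro conjI allI)
      fix i show "0 \<le> a * x $ i + b * y $ i" using x y ab by simp
    next
      show "(\<Sum>i\<in>UNIV. a * x $ i + b * y $ i) = 1"
        using x y ab by (simp add: sum.distrib sum_distrib_left[symmetric])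
    next
      fix i
      have "B *v (a *\<^sub>R x + b *\<^sub>R y) = a *\<^sub>R (B *v x) + b *\<^sub>R (B *v y)"
        by (simp add: matrix_vector_right_distrib matrix_vector_mult_scaleR)
      then show "a * x $ i + b * y $ i \<le> (B *v (a *\<^sub>R x + b *\<^sub>R y)) $ i"
        using x(3) y(3) ab by (simp add: add_mono mult_left_mono)
    qed
    then show "a *\<^sub>R x + b *\<^sub>R y \<in> S" unfolding S_def by simp
  qed
  moreover have "S \<noteq> {}"
  proof -
    define c where "c = sum (\<lambda>i. u$i) UNIV"
    obtain k where "u$k \<noteq> 0" using unz by (auto simp: vec_eq_iff)
    then have "u$k > 0" using u0 by (metis less_eq_real_def)
    then have "c \<ge> u$k" unfolding c_def using u0
      by (intro member_le_sum) auto
    then have c: "c > 0" using \<open>u$k > 0\<close> by simp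
    have "(1/c) *\<^sub>R u \<in> S" unfolding S_def using c u0 Bu
      by (auto simp: matrix_vector_mult_scaleR sum_divide_distrib[symmetric] c_def divide_right_mono)
    then show ?thesis by blast
  qed
  moreover have "continuous_on S f"
    unfolding f_def matrix_vector_mult_def
    using sumB unfolding matrix_vector_mult_def
    by (intro continuous_intros) force
  moreover have "f \<in> S \<rightarrow> S"
  proof
    fix v assume v: "v \<in> S"
    define s where "s = sum (\<lambda>i. (B *v v)$i) UNIV"
    have s: "s \<ge> 1" using sumB[OF v] s_def by simp
    have Bv0: "\<forall>i. (B *v v)$i \<ge> 0" using v Bmono unfolding S_def by blast
    have "\<forall>i. (B *v (B *v v - v))$i \<ge> 0"
      using v by (intro allI Bmono) (auto simp: S_def)
    then have BB: "(B *v (B *v v))$i \<ge> (B *v v)$i" for i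
      by (simp add: matrix_vector_mult_diff_distrib)
    show "f v \<in> S" unfolding S_def f_def s_def[symmetric] using s Bv0 BB
      by (auto simp: matrix_vector_mult_scaleR sum_divide_distrib[symmetric] s_def divide_right_mono)
  qed
  ultimately obtain v where v: "v \<in> S" "f v = v" using brouwer by metis
  define s where "s = sum (\<lambda>i. (B *v v)$i) UNIV"
  have s: "s \<ge> 1" using sumB[OF v(1)] s_def by simp
  have "B *v v = s *s v"
  proof -
    have "(1/s) *\<^sub>R (B *v v) = v" using v(2) unfolding f_def s_def by simp
    then have "B *v v = s *\<^sub>R v" using s by (metis scaleR_scaleR divide_self_if
          mult.commute nonzero_divide_eq_eq one_neq_zero scaleR_one not_one_le_zero)
    then show ?thesis by (simp add: scalar_mult_eq_scaleR)
  qed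
  moreover have "v \<noteq> 0" using v(1) unfolding S_def by auto
  ultimately have "\<bar>s\<bar> \<le> spectral_radius B" using real_eig by blast
  then show False using s rad by simp
qed

lemma mono_inv:
  fixes B :: "real^'n^'n" and x :: "real^'n"
  assumes Bnn: "\<forall>i j. B$i$j \<ge> 0" and rad: "spectral_radius B < 1"
    and y: "\<forall>i. ((mat 1 - B) *v x)$i \<ge> 0"
  shows "\<forall>i. x$i \<ge> 0"
proof (rule ccontr)
  assume neg: "\<not> (\<forall>i. x$i \<ge> 0)"
  define u where "u = (\<chi> i. max (- x$i) 0)"
  have u0: "\<forall>i. u$i \<ge> 0" unfolding u_def by simp
  have unz: "u \<noteq> 0" using neg unfolding u_def by (auto simp: vec_eq_iff max_def split: if_splits)
  have Bu: "\<forall>i. (B *v u)$i \<ge> u$i"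
  proof
    fix i
    have Bu0: "(B *v u)$i \<ge> 0" using Bnn u0 by (auto simp: matrix_vector_mult_def intro!: sum_nonneg)
    have "(B *v x)$i \<ge> - (B *v u)$i"
    proof -
      have "(\<Sum>j\<in>UNIV. B$i$j * (- u$j)) \<le> (\<Sum>j\<in>UNIV. B$i$j * x$j)"
        using Bnn by (intro sum_mono mult_left_mono) (auto simp: u_def)
      then show ?thesis by (simp add: matrix_vector_mult_def sum_negf)
    qed
    moreover have "x$i - (B *v x)$i \<ge> 0" using y[rule_format, of i]
      by (simp add: matrix_vector_mult_diff_rdistrib)
    ultimately show "(B *v u)$i \<ge> u$i" using Bu0 unfolding u_def by auto
  qed
  show False using no_super[OF Bnn rad u0 unz Bu] .
qed

lemma mono_cmp:
  fixes B :: "real^'n^'n" and x y :: "real^'n"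
  assumes Bnn: "\<forall>i j. B$i$j \<ge> 0" and rad: "spectral_radius B < 1"
    and le: "\<forall>i. ((mat 1 - B) *v x)$i \<le> ((mat 1 - B) *v y)$i"
  shows "\<forall>i. x$i \<le> y$i"
proof -
  have "\<forall>i. ((mat 1 - B) *v (y - x))$i \<ge> 0" using le
    by (simp add: matrix_vector_mult_diff_distrib)
  then show ?thesis using mono_inv[OF Bnn rad] by fastforce
qed

lemma inv_ok:
  fixes B :: "real^'n^'n"
  assumes Bnn: "\<forall>i j. B$i$j \<ge> 0" and rad: "spectral_radius B < 1"
  shows "(mat 1 - B) *v (matrix_inv (mat 1 - B) *v n) = n"
proof -
  let ?G = "mat 1 - B"
  have "\<forall>x. ?G *v x = 0 \<longrightarrow> x = 0"
  proof (intro allI impI)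
    fix x assume "?G *v x = 0"
    then have "\<forall>i. x$i \<le> 0 $ i" "\<forall>i. 0 $ i \<le> x$i"
      using mono_cmp[OF Bnn rad, of x 0] mono_cmp[OF Bnn rad, of 0 x] by auto
    then show "x = 0" by (simp add: vec_eq_iff order.antisym)
  qed
  then have "invertible ?G"
    using matrix_left_invertible_ker invertible_left_inverse by blast
  then have "?G ** matrix_inv ?G = mat 1"
    unfolding invertible_def matrix_inv_def by (rule someI_ex[THEN conjunct1])
  then show ?thesis by (metis matrix_vector_mul_assoc matrix_vector_mul_lid)
qed


lemma Bnn_lemma:
  assumes g_nonneg: "\<forall>i k j. k \<in> {1..K i} \<longrightarrow> g i k j \<ge> 0"
    and g_pos: "\<forall>i k. k \<in> {1..K i} \<longrightarrow> g i k i > 0"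
    and mu_pos: "\<forall>i. mu$i > 0" and ch: "choice K kc"
  shows "\<forall>i j. (mat 1 - Gmat g mu kc)$i$j \<ge> 0"
proof (intro allI)
  fix i j
  have k: "kc i \<in> {1..K i}" using ch unfolding choice_def by blast
  have "mu$i * g i (kc i) j / g i (kc i) i \<ge> 0"
    using g_nonneg g_pos mu_pos k by (meson divide_nonneg_pos less_eq_real_def mult_nonneg_nonneg)
  then show "(mat 1 - Gmat g mu kc)$i$j \<ge> 0"
    by (auto simp: Gmat_def arow_def mat_def)
qed

theorem lemma2:
  fixes K :: "'n::finite \<Rightarrow> nat" and g :: "'n \<Rightarrow> nat \<Rightarrow> 'n \<Rightarrow> real"
    and sigma2 :: real and mu :: "real^'n" and khat ktil :: "'n \<Rightarrow> nat"
  assumes K_pos: "\<forall>i. K i \<ge> 1"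
    and g_nonneg: "\<forall>i k j. k \<in> {1..K i} \<longrightarrow> g i k j \<ge> 0"
    and g_pos: "\<forall>i k. k \<in> {1..K i} \<longrightarrow> g i k i > 0"
    and sigma_pos: "sigma2 > 0"
    and mu_pos: "\<forall>i. mu$i > 0"
    and ch_hat: "choice K khat" and ch_til: "choice K ktil"
    and differ: "\<exists>i. khat i \<noteq> ktil i \<and> (\<forall>j. j \<noteq> i \<longrightarrow> khat j = ktil j)"
    and irr_hat: "irreducible_mat (mat 1 - Gmat g mu khat)"
    and irr_til: "irreducible_mat (mat 1 - Gmat g mu ktil)"
    and rad_hat: "spectral_radius (mat 1 - Gmat g mu khat) < 1"
    and rad_til: "spectral_radius (mat 1 - Gmat g mu ktil) < 1"
  shows "\<exists>p \<in> {matrix_inv (Gmat g mu khat) *v nvec sigma2 g mu khat,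
               matrix_inv (Gmat g mu ktil) *v nvec sigma2 g mu ktil}.
           (\<forall>j. (Gmat g mu khat *v p)$j \<ge> (nvec sigma2 g mu khat)$j) \<and>
           (\<forall>j. (Gmat g mu ktil *v p)$j \<ge> (nvec sigma2 g mu ktil)$j)"
proof -
  obtain i0 where i0: "\<forall>j. j \<noteq> i0 \<longrightarrow> khat j = ktil j" using differ by blast
  define Gh where "Gh = Gmat g mu khat"
  define Gt where "Gt = Gmat g mu ktil"
  define nh where "nh = nvec sigma2 g mu khat"
  define nt where "nt = nvec sigma2 g mu ktil"
  define ph where "ph = matrix_inv Gh *v nh"
  define pt where "pt = matrix_inv Gt *v nt"
  have Bh: "\<forall>i j. (mat 1 - Gh)$i$j \<ge> 0" unfolding Gh_def
    by (rule Bnn_lemma[OF g_nonneg g_pos mu_pos ch_hat])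
  have Bt: "\<forall>i j. (mat 1 - Gt)$i$j \<ge> 0" unfolding Gt_def
    by (rule Bnn_lemma[OF g_nonneg g_pos mu_pos ch_til])
  have rh: "spectral_radius (mat 1 - Gh) < 1" using rad_hat Gh_def by simp
  have rt: "spectral_radius (mat 1 - Gt) < 1" using rad_til Gt_def by simp
  have Gph: "Gh *v ph = nh" using inv_ok[OF Bh rh, of nh] unfolding ph_def by simp
  have Gpt: "Gt *v pt = nt" using inv_ok[OF Bt rt, of nt] unfolding pt_def by simp
  have rows: "(Gh *v p)$j = (Gt *v p)$j" if "j \<noteq> i0" for p j
    using i0 that by (simp add: Gh_def Gt_def Gmat_def matrix_vector_mult_def)
  have nrows: "nh$j = nt$j" if "j \<noteq> i0" for j
    using i0 that by (simp add: nh_def nt_def nvec_def)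
  have monoh: "\<forall>i. x$i \<le> y$i" if "\<forall>i. (Gh *v x)$i \<le> (Gh *v y)$i" for x y
    using mono_cmp[OF Bh rh, of x y] that by simp
  have monot: "\<forall>i. x$i \<le> y$i" if "\<forall>i. (Gt *v x)$i \<le> (Gt *v y)$i" for x y
    using mono_cmp[OF Bt rt, of x y] that by simp
  show ?thesis
  proof (cases "\<forall>j. (Gt *v ph)$j \<ge> nt$j")
    case True
    then show ?thesis using Gph
      by (intro bexI[of _ ph]) (auto simp: ph_def Gh_def Gt_def nh_def nt_def)
  next
    case False
    then obtain j where j: "(Gt *v ph)$j < nt$j" by (auto simp: not_le)
    have "\<forall>j. (Gh *v pt)$j \<ge> nh$j"
    proof (rule ccontr)
      assume "\<not> (\<forall>j. (Gh *v pt)$j \<ge> nh$j)"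
      then obtain j' where j': "(Gh *v pt)$j' < nh$j'" by (auto simp: not_le)
      have "(Gh *v pt)$i \<le> (Gh *v ph)$i" for i
      proof (cases "i = i0")
        case True
        have "j' = i0" using j' rows nrows Gpt by (metis less_irrefl)
        then show ?thesis using True j' Gph by simp
      next
        case False
        then show ?thesis using rows nrows Gpt Gph by simp
      qed
      then have l1: "\<forall>i. pt$i \<le> ph$i" using monoh by blast
      have "(Gt *v ph)$i \<le> (Gt *v pt)$i" for i
      proof (cases "i = i0")
        case True
        have "j = i0" using j rows nrows Gpt Gph by (metis less_irrefl)
        then show ?thesis using True j Gpt by simp
      next
        case False
        then show ?thesis using rows nrows Gpt Gph by (metis order_refl)
      qed
      then have l2: "\<forall>i. ph$i \<le> pt$i" using monot by blast
      have "ph = pt" using l1 l2 by (simp add: vec_eq_iff order.antisym)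
      then show False using j Gpt by simp
    qed
    then show ?thesis using Gpt
      by (intro bexI[of _ pt]) (auto simp: pt_def Gh_def Gt_def nh_def nt_def)
  qed
qed

end
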